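(* In the roundabout exploration process described in the context (with $k\ge 1$), let $t=\lfloor N/(2k)\rfloor$. Then $|A(t)|\le 6k$.
   Context: Let $n\ge 2$ and $k\ge 1$ be natural numbers, $T$ a tree on an $n$-element vertex set $V$, and $N=2(n-1)$. Fix a root $r$ and a DFS tour of $T$ starting and ending at $r$ that traverses each edge of $T$ exactly twice, giving a cyclic vertex sequence $(v_1,\dots,v_N,v_{N+1})$ with $v_{N+1}=v_1=r$, and tour edges $e_i=\{v_i,v_{i+1}\}$ for $i\in[N]$. For $i,j\in[N]$ the circular interval $[\![i,j]\!]$ is $\{i,i+1,\dots,j\}$ if $i\le j$ and $\{i,\dots,N,1,\dots,j\}$ if $i>j$. Let $\langle G_1,\dots,G_N\rangle$ be graphs on $V$, each containing all but at most $k$ edges of $T$. Roundabout exploration process: agents $a_1,\dots,a_N$ with initial states $s_i(0)=i$. For steps $t=1,\dots,N$: (Movement) for every $i\in[N]$, if $s_i(t-1)=q$ then $s_i(t)=(q\bmod N)+1$ if $e_q\in E(G_t)$, and $s_i(t)=q$ otherwise. Let $D_i(t)=[\![i,s_i(t)]\!]$ and $D_i(0)=\{i\}$. (Elimination) $A(0)=\{a_1,\dots,a_N\}$; $A(t)$ is obtained from $A(t-1)$ by repeatedly removing an arbitrary agent $a_i$ of the current set with $D_i(t)\subseteq\bigcup D_j(t)$ over the other agents $a_j$ of the current set, until no such agent remains. *)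

theory Defs
  imports Main
begin

definition simple_graph :: "'a set \<Rightarrow> 'a set set \<Rightarrow> bool" where
  "simple_graph V E \<longleftrightarrow> (\<forall>e\<in>E. e \<subseteq> V \<and> card e = 2)"

definition adj_rel :: "'a set set \<Rightarrow> ('a \<times> 'a) set" where
  "adj_rel E = {(x, y). {x, y} \<in> E}"

definition graph_connected :: "'a set \<Rightarrow> 'a set set \<Rightarrow> bool" where
  "graph_connected V E \<longleftrightarrow> (\<forall>x\<in>V. \<forall>y\<in>V. (x, y) \<in> (adj_rel E)\<^sup>*)"

definition is_cycle :: "'a set set \<Rightarrow> 'a list \<Rightarrow> bool" where
  "is_cycle E cs \<longleftrightarrow> length cs \<ge> 3 \<and> distinct cs
     \<and> (\<forall>i. Suc i < length cs \<longrightarrow> {cs ! i, cs ! Suc i} \<in> E)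
     \<and> {last cs, hd cs} \<in> E"

definition is_tree :: "'a set \<Rightarrow> 'a set set \<Rightarrow> bool" where
  "is_tree V E \<longleftrightarrow> simple_graph V E \<and> V \<noteq> {} \<and> graph_connected V E \<and> (\<nexists>cs. is_cycle E cs)"

text \<open>A closed walk v_1 ... v_{N+1} in T with v_1 = v_{N+1} = r traversing every edge of T
  exactly twice (N = 2(n-1)); in a tree this is exactly a DFS tour from r.\<close>
definition dfs_tour :: "'a set set \<Rightarrow> 'a \<Rightarrow> nat \<Rightarrow> (nat \<Rightarrow> 'a) \<Rightarrow> bool" where
  "dfs_tour T r N v \<longleftrightarrow> v 1 = r \<and> v (N + 1) = r
     \<and> (\<forall>i\<in>{1..N}. {v i, v (Suc i)} \<in> T)
     \<and> (\<forall>e\<in>T. card {i\<in>{1..N}. {v i, v (Suc i)} = e} = 2)"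

definition cint :: "nat \<Rightarrow> nat \<Rightarrow> nat \<Rightarrow> nat set" where
  "cint N i j = (if i \<le> j then {i..j} else {i..N} \<union> {1..j})"

text \<open>State s_i(t) of agent a_i; tour edge e_q = {v_q, v_(q+1)}; G t is the edge set of G_t.\<close>
fun agent_pos :: "nat \<Rightarrow> (nat \<Rightarrow> 'a) \<Rightarrow> (nat \<Rightarrow> 'a set set) \<Rightarrow> nat \<Rightarrow> nat \<Rightarrow> nat" where
  "agent_pos N v G i 0 = i"
| "agent_pos N v G i (Suc t) =
     (let q = agent_pos N v G i t in
      if {v q, v (Suc q)} \<in> G (Suc t) then q mod N + 1 else q)"

definition agent_D :: "nat \<Rightarrow> (nat \<Rightarrow> 'a) \<Rightarrow> (nat \<Rightarrow> 'a set set) \<Rightarrow> nat \<Rightarrow> nat \<Rightarrow> nat set" where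
  "agent_D N v G i t = cint N i (agent_pos N v G i t)"

definition elim_step :: "nat \<Rightarrow> (nat \<Rightarrow> 'a) \<Rightarrow> (nat \<Rightarrow> 'a set set) \<Rightarrow> nat \<Rightarrow> (nat set \<times> nat set) set" where
  "elim_step N v G t = {(S, S - {i}) | S i. i \<in> S \<and>
       agent_D N v G i t \<subseteq> (\<Union>j\<in>S - {i}. agent_D N v G j t)}"

definition valid_elimination :: "nat \<Rightarrow> (nat \<Rightarrow> 'a) \<Rightarrow> (nat \<Rightarrow> 'a set set) \<Rightarrow> (nat \<Rightarrow> nat set) \<Rightarrow> bool" where
  "valid_elimination N v G A \<longleftrightarrow> A 0 = {1..N} \<and>
     (\<forall>t\<in>{1..N}. (A (t - 1), A t) \<in> (elim_step N v G t)\<^sup>* \<and>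
                 (\<nexists>S'. (A t, S') \<in> elim_step N v G t))"

end

theory Submission
  imports Defs "HOL-Number_Theory.Cong"
begin

definition wrapF :: "nat \<Rightarrow> nat \<Rightarrow> nat" where
  "wrapF N y = (y - 1) mod N + 1"

definition arc :: "nat \<Rightarrow> nat \<Rightarrow> nat \<Rightarrow> nat set" where
  "arc N i m = {x\<in>{1..N}. \<exists>s\<le>m. [i + s = x] (mod N)}"

lemma cong_eq_1N:
  fixes x y N :: nat
  assumes "1 \<le> x" "x \<le> N" "1 \<le> y" "y \<le> N" "[x = y] (mod N)"
  shows "x = y"
proof -
  have "[x - 1 + 1 = y - 1 + 1] (mod N)" using assms by simp
  then have "[x - 1 = y - 1] (mod N)" using cong_add_rcancel_nat by blast
  then have "x - 1 = y - 1" using assms by (intro cong_less_imp_eq_nat) auto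
  then show ?thesis using assms by simp
qed

lemma wrapF_cong: "1 \<le> y \<Longrightarrow> [wrapF N y = y] (mod N)"
proof -
  assume "1 \<le> y"
  have "[(y - 1) mod N + 1 = y - 1 + 1] (mod N)"
    by (simp add: cong_def mod_Suc_eq)
  then show ?thesis using \<open>1 \<le> y\<close> by (simp add: wrapF_def)
qed

lemma wrapF_range: "0 < N \<Longrightarrow> wrapF N y \<in> {1..N}"
  by (simp add: wrapF_def Suc_leI)

lemma wrapF_eq_cong: "0 < N \<Longrightarrow> 1 \<le> y \<Longrightarrow> 1 \<le> z \<Longrightarrow> wrapF N y = wrapF N z \<longleftrightarrow> [y = z] (mod N)"
proof
  assume "0 < N" "1 \<le> y" "1 \<le> z"
  { assume "wrapF N y = wrapF N z"
    then show "[y = z] (mod N)" using wrapF_cong[of y N] wrapF_cong[of z N] \<open>1 \<le> y\<close> \<open>1 \<le> z\<close>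
      by (metis cong_sym cong_trans) }
  { assume "[y = z] (mod N)"
    then have "[wrapF N y = wrapF N z] (mod N)" using wrapF_cong[of y N] wrapF_cong[of z N] \<open>1 \<le> y\<close> \<open>1 \<le> z\<close>
      by (metis cong_sym cong_trans)
    then show "wrapF N y = wrapF N z"
      using wrapF_range[OF \<open>0 < N\<close>] by (intro cong_eq_1N) auto }
qed

lemma wrapF_step: "0 < N \<Longrightarrow> 1 \<le> y \<Longrightarrow> wrapF N y mod N + 1 = wrapF N (y + 1)"
  unfolding wrapF_def by (simp add: mod_Suc_eq)

lemma sub2:
  fixes N i j l si sj sl mi mj ml x :: nat
  assumes "[i + si = x] (mod N)" "[j + sj = x] (mod N)" "[l + sl = x] (mod N)"
    "si \<le> mi" "sj \<le> mj" "sl \<le> ml" "si \<le> sj" "mi - si \<le> ml - sl"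
  shows "arc N i mi \<subseteq> arc N j mj \<union> arc N l ml"
proof
  fix y assume "y \<in> arc N i mi"
  then obtain s where y: "y \<in> {1..N}" "s \<le> mi" "[i + s = y] (mod N)" unfolding arc_def by auto
  show "y \<in> arc N j mj \<union> arc N l ml"
  proof (cases "s \<le> si")
    case True
    define s' where "s' = sj - si + s"
    have "j + s' + si = j + sj + s" using True assms by (simp add: s'_def)
    then have "[j + s' + si = j + sj + s] (mod N)" by (metis cong_refl)
    also have "[j + sj + s = x + s] (mod N)" using assms(2) by (simp add: cong_add)
    also have "[x + s = i + si + s] (mod N)" using assms(1) by (simp add: cong_add cong_sym)
    also have "i + si + s = i + s + si" by simp
    finally have "[j + s' = i + s] (mod N)" using cong_add_rcancel_nat by blast
    then have "[j + s' = y] (mod N)" using y cong_trans by blast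
    moreover have "s' \<le> mj" using True assms by (simp add: s'_def)
    ultimately show ?thesis using y unfolding arc_def by auto
  next
    case False
    define s' where "s' = sl + (s - si)"
    have "l + s' + si = l + sl + s" using False assms by (simp add: s'_def)
    then have "[l + s' + si = l + sl + s] (mod N)" by (metis cong_refl)
    also have "[l + sl + s = x + s] (mod N)" using assms(3) by (simp add: cong_add)
    also have "[x + s = i + si + s] (mod N)" using assms(1) by (simp add: cong_add cong_sym)
    also have "i + si + s = i + s + si" by simp
    finally have "[l + s' = i + s] (mod N)" using cong_add_rcancel_nat by blast
    then have "[l + s' = y] (mod N)" using y cong_trans by blast
    moreover have "s' \<le> ml" using False assms y by (simp add: s'_def)
    ultimately show ?thesis using y unfolding arc_def by auto
  qed
qed


lemma cint_char:
  assumes "0 < N" "1 \<le> i" "i \<le> N" "m < N"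
  shows "cint N i (wrapF N (i + m)) = arc N i m"
proof (cases "i + m \<le> N")
  case True
  have w: "wrapF N (i + m) = i + m" using True assms by (simp add: wrapF_def)
  show ?thesis
  proof
    show "cint N i (wrapF N (i + m)) \<subseteq> arc N i m"
    proof
      fix x assume "x \<in> cint N i (wrapF N (i + m))"
      then have x: "i \<le> x" "x \<le> i + m" using w by (auto simp: cint_def)
      then have "[i + (x - i) = x] (mod N)" by simp
      then show "x \<in> arc N i m" using x assms True unfolding arc_def
        by (intro CollectI conjI exI[of _ "x - i"]) auto
    qed
    show "arc N i m \<subseteq> cint N i (wrapF N (i + m))"
    proof
      fix x assume "x \<in> arc N i m"
      then obtain s where s: "x \<in> {1..N}" "s \<le> m" "[i + s = x] (mod N)" unfolding arc_def by auto
      then have "i + s = x" using assms True by (intro cong_eq_1N) auto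
      then show "x \<in> cint N i (wrapF N (i + m))" using w s by (auto simp: cint_def)
    qed
  qed
next
  case False
  have w: "wrapF N (i + m) = i + m - N"
  proof -
    have "(i + m - 1) mod N = i + m - 1 - N" using False assms
      by (subst le_mod_geq) auto
    then show ?thesis using False assms by (simp add: wrapF_def)
  qed
  have lt: "i + m - N < i" using assms by simp
  show ?thesis
  proof
    show "cint N i (wrapF N (i + m)) \<subseteq> arc N i m"
    proof
      fix x assume "x \<in> cint N i (wrapF N (i + m))"
      then have x: "(i \<le> x \<and> x \<le> N) \<or> (1 \<le> x \<and> x \<le> i + m - N)" using w lt by (auto simp: cint_def)
      then show "x \<in> arc N i m"
      proof
        assume h: "i \<le> x \<and> x \<le> N"
        then have "[i + (x - i) = x] (mod N)" by simp
        then show "x \<in> arc N i m" using h assms False unfolding arc_def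
          by (intro CollectI conjI exI[of _ "x - i"]) auto
      next
        assume h: "1 \<le> x \<and> x \<le> i + m - N"
        have "i + (x + N - i) = x + N" using assms by simp
        then have "[i + (x + N - i) = x] (mod N)" by (simp add: cong_def)
        then show "x \<in> arc N i m" using h assms False unfolding arc_def
          by (intro CollectI conjI exI[of _ "x + N - i"]) auto
      qed
    qed
    show "arc N i m \<subseteq> cint N i (wrapF N (i + m))"
    proof
      fix x assume "x \<in> arc N i m"
      then obtain s where s: "x \<in> {1..N}" "s \<le> m" "[i + s = x] (mod N)" unfolding arc_def by auto
      show "x \<in> cint N i (wrapF N (i + m))"
      proof (cases "i + s \<le> N")
        case True
        then have "i + s = x" using assms s by (intro cong_eq_1N) auto
        then show ?thesis using w lt s True by (auto simp: cint_def)
      next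
        case F2: False
        have "[i + s - N + N = i + s] (mod N)" using F2 by simp
        then have "[i + s - N = i + s] (mod N)" by (metis cong_def mod_add_self2)
        then have "[i + s - N = x] (mod N)" using s cong_trans by blast
        then have "i + s - N = x" using assms s F2 by (intro cong_eq_1N) auto
        then show ?thesis using w lt s F2 by (auto simp: cint_def)
      qed
    qed
  qed
qed

lemma arc_card:
  assumes "0 < N" "1 \<le> i" "m < N"
  shows "m + 1 \<le> card (arc N i m)"
proof -
  have inj: "inj_on (\<lambda>s. wrapF N (i + s)) {0..m}"
  proof (rule inj_onI)
    fix s s' assume "s \<in> {0..m}" "s' \<in> {0..m}" "wrapF N (i + s) = wrapF N (i + s')"
    then have "[i + s = i + s'] (mod N)" using wrapF_eq_cong assms by auto
    then have "[s = s'] (mod N)" using cong_add_lcancel_nat by blast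
    then show "s = s'" using \<open>s \<in> {0..m}\<close> \<open>s' \<in> {0..m}\<close> assms by (intro cong_less_imp_eq_nat) auto
  qed
  have sub: "(\<lambda>s. wrapF N (i + s)) ` {0..m} \<subseteq> arc N i m"
  proof
    fix x assume "x \<in> (\<lambda>s. wrapF N (i + s)) ` {0..m}"
    then obtain s where s: "s \<le> m" "x = wrapF N (i + s)" by auto
    have "[i + s = x] (mod N)" using s wrapF_cong[of "i + s" N] assms by (simp add: cong_sym)
    then show "x \<in> arc N i m" using s wrapF_range[OF assms(1)] unfolding arc_def by auto
  qed
  have "finite (arc N i m)" unfolding arc_def by simp
  then have "card ((\<lambda>s. wrapF N (i + s)) ` {0..m}) \<le> card (arc N i m)" using sub card_mono by blast
  then show ?thesis using card_image[OF inj] by simp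
qed

lemma three:
  fixes m :: "nat \<Rightarrow> nat"
  assumes "x \<in> arc N a (m a)" "x \<in> arc N b (m b)" "x \<in> arc N c (m c)"
    and d: "a \<noteq> b" "b \<noteq> c" "a \<noteq> c"
  shows "\<exists>i\<in>{a,b,c}. \<exists>j\<in>{a,b,c}. \<exists>l\<in>{a,b,c}. j \<noteq> i \<and> l \<noteq> i \<and> 
           arc N i (m i) \<subseteq> arc N j (m j) \<union> arc N l (m l)"
proof -
  from assms obtain sa sb sc where
    sa: "sa \<le> m a" "[a + sa = x] (mod N)" and
    sb: "sb \<le> m b" "[b + sb = x] (mod N)" and
    sc: "sc \<le> m c" "[c + sc = x] (mod N)" unfolding arc_def by auto
  have False: "\<not> (a = b \<or> b = c \<or> a = c)" using d by blast
  have "(sb \<le> sa \<and> sc \<le> sa) \<or> (sa \<le> sb \<and> sc \<le> sb) \<or> (sa \<le> sc \<and> sb \<le> sc)" by linarith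
  then show ?thesis
  proof (elim disjE conjE)
    assume "sb \<le> sa" "sc \<le> sa"
    show ?thesis
    proof (cases "m b - sb \<le> m c - sc")
      case True
      then have "arc N b (m b) \<subseteq> arc N a (m a) \<union> arc N c (m c)"
        using sub2[OF sb(2) sa(2) sc(2) sb(1) sa(1) sc(1)] \<open>sb \<le> sa\<close> by simp
      then show ?thesis using False by (intro bexI[of _ b] bexI[of _ a] bexI[of _ c] conjI) auto
    next
      case F: False
      then have "arc N c (m c) \<subseteq> arc N a (m a) \<union> arc N b (m b)"
        using sub2[OF sc(2) sa(2) sb(2) sc(1) sa(1) sb(1)] \<open>sc \<le> sa\<close> by simp
      then show ?thesis using False by (intro bexI[of _ c] bexI[of _ a] bexI[of _ b] conjI) auto
    qed
  next
    assume "sa \<le> sb" "sc \<le> sb"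
    show ?thesis
    proof (cases "m a - sa \<le> m c - sc")
      case True
      then have "arc N a (m a) \<subseteq> arc N b (m b) \<union> arc N c (m c)"
        using sub2[OF sa(2) sb(2) sc(2) sa(1) sb(1) sc(1)] \<open>sa \<le> sb\<close> by simp
      then show ?thesis using False by (intro bexI[of _ a] bexI[of _ b] bexI[of _ c] conjI) auto
    next
      case F: False
      then have "arc N c (m c) \<subseteq> arc N b (m b) \<union> arc N a (m a)"
        using sub2[OF sc(2) sb(2) sa(2) sc(1) sb(1) sa(1)] \<open>sc \<le> sb\<close> by simp
      then show ?thesis using False by (intro bexI[of _ c] bexI[of _ b] bexI[of _ a] conjI) auto
    qed
  next
    assume "sa \<le> sc" "sb \<le> sc"
    show ?thesis
    proof (cases "m a - sa \<le> m b - sb")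
      case True
      then have "arc N a (m a) \<subseteq> arc N c (m c) \<union> arc N b (m b)"
        using sub2[OF sa(2) sc(2) sb(2) sa(1) sc(1) sb(1)] \<open>sa \<le> sc\<close> by simp
      then show ?thesis using False by (intro bexI[of _ a] bexI[of _ c] bexI[of _ b] conjI) auto
    next
      case F: False
      then have "arc N b (m b) \<subseteq> arc N c (m c) \<union> arc N a (m a)"
        using sub2[OF sb(2) sc(2) sa(2) sb(1) sc(1) sa(1)] \<open>sb \<le> sc\<close> by simp
      then show ?thesis using False by (intro bexI[of _ b] bexI[of _ c] bexI[of _ a] conjI) auto
    qed
  qed
qed


definition moved :: "nat \<Rightarrow> (nat \<Rightarrow> 'a) \<Rightarrow> (nat \<Rightarrow> 'a set set) \<Rightarrow> nat \<Rightarrow> nat \<Rightarrow> bool" where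
  "moved N v G i \<sigma> = ({v (agent_pos N v G i (\<sigma> - 1)), v (Suc (agent_pos N v G i (\<sigma> - 1)))} \<in> G \<sigma>)"

definition mcnt :: "nat \<Rightarrow> (nat \<Rightarrow> 'a) \<Rightarrow> (nat \<Rightarrow> 'a set set) \<Rightarrow> nat \<Rightarrow> nat \<Rightarrow> nat" where
  "mcnt N v G i \<tau> = card {\<sigma>\<in>{1..\<tau>}. moved N v G i \<sigma>}"

lemma mcnt_Suc:
  "mcnt N v G i (Suc \<tau>) = mcnt N v G i \<tau> + (if moved N v G i (Suc \<tau>) then 1 else 0)"
proof -
  have "{\<sigma>\<in>{1..Suc \<tau>}. moved N v G i \<sigma>} =
        {\<sigma>\<in>{1..\<tau>}. moved N v G i \<sigma>} \<union> (if moved N v G i (Suc \<tau>) then {Suc \<tau>} else {})"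
    by (auto simp: le_Suc_eq)
  then show ?thesis unfolding mcnt_def by (auto simp: card_insert_if)
qed

lemma mcnt_le: "mcnt N v G i \<tau> \<le> \<tau>"
proof -
  have "mcnt N v G i \<tau> \<le> card {1..\<tau>}" unfolding mcnt_def by (intro card_mono) auto
  then show ?thesis by simp
qed

lemma blocked_card: "card {\<sigma>\<in>{1..\<tau>}. \<not> moved N v G i \<sigma>} = \<tau> - mcnt N v G i \<tau>"
proof -
  have "{\<sigma>\<in>{1..\<tau>}. \<not> moved N v G i \<sigma>} = {1..\<tau>} - {\<sigma>\<in>{1..\<tau>}. moved N v G i \<sigma>}" by auto
  moreover have "card ({1..\<tau>} - {\<sigma>\<in>{1..\<tau>}. moved N v G i \<sigma>}) = card {1..\<tau>} - card {\<sigma>\<in>{1..\<tau>}. moved N v G i \<sigma>}"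
    by (rule card_Diff_subset) auto
  ultimately show ?thesis unfolding mcnt_def by simp
qed

lemma pos_eq:
  assumes "0 < N" "1 \<le> i" "i \<le> N"
  shows "agent_pos N v G i \<tau> = wrapF N (i + mcnt N v G i \<tau>)"
proof (induction \<tau>)
  case 0
  have "(i - 1) mod N = i - 1" using assms by simp
  then show ?case using assms by (simp add: wrapF_def mcnt_def)
next
  case (Suc \<tau>)
  show ?case
  proof (cases "moved N v G i (Suc \<tau>)")
    case True
    then have "agent_pos N v G i (Suc \<tau>) = agent_pos N v G i \<tau> mod N + 1"
      by (simp add: moved_def Let_def)
    also have "\<dots> = wrapF N (i + mcnt N v G i \<tau> + 1)" using Suc assms wrapF_step by simp
    finally show ?thesis using True by (simp add: mcnt_Suc)
  next
    case False
    then have "agent_pos N v G i (Suc \<tau>) = agent_pos N v G i \<tau>"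
      by (simp add: moved_def Let_def)
    then show ?thesis using False Suc by (simp add: mcnt_Suc)
  qed
qed

lemma pos_same:
  assumes "agent_pos N v G i \<tau> = agent_pos N v G j \<tau>" "\<tau> \<le> \<tau>'"
  shows "agent_pos N v G i \<tau>' = agent_pos N v G j \<tau>'"
  using assms(2)
proof (induction \<tau>' rule: dec_induct)
  case base
  then show ?case using assms(1) .
next
  case (step n)
  then show ?case by (simp add: Let_def)
qed

lemma elim_rtr: "(X, Y) \<in> (elim_step N v G t)\<^sup>* \<Longrightarrow> Y \<subseteq> X"
proof (induction rule: rtrancl_induct)
  case base
  then show ?case by simp
next
  case (step y z)
  then show ?case unfolding elim_step_def by auto
qed

lemma A_sub:
  assumes "valid_elimination N v G A" "t \<le> N"
  shows "A t \<subseteq> {1..N}"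
  using assms(2)
proof (induction t)
  case 0
  then show ?case using assms(1) by (simp add: valid_elimination_def)
next
  case (Suc t)
  then have "(A t, A (Suc t)) \<in> (elim_step N v G (Suc t))\<^sup>*"
    using assms(1) unfolding valid_elimination_def by force
  then show ?case using elim_rtr Suc by fastforce
qed


lemma three_elems:
  assumes "finite X" "3 \<le> card X"
  obtains a b c where "a \<in> X" "b \<in> X" "c \<in> X" "a \<noteq> b" "b \<noteq> c" "a \<noteq> c"
proof -
  obtain a where a: "a \<in> X" using assms by fastforce
  have "2 \<le> card (X - {a})" using assms a by simp
  then have "X - {a} \<noteq> {}" by (metis card.empty not_numeral_le_zero)
  then obtain b where b: "b \<in> X - {a}" by blast
  have "1 \<le> card (X - {a} - {b})" using assms a b by simp
  then have "X - {a} - {b} \<noteq> {}" by (metis card.empty not_one_le_zero)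
  then obtain c where c: "c \<in> X - {a} - {b}" by blast
  show ?thesis using a b c that by blast
qed

theorem corollary9:
  fixes V :: "'a set" and T :: "'a set set" and n k N :: nat and r :: 'a
    and v :: "nat \<Rightarrow> 'a" and G :: "nat \<Rightarrow> 'a set set" and A :: "nat \<Rightarrow> nat set"
  assumes "finite V" and "card V = n" and "n \<ge> 2" and "k \<ge> 1"
    and "is_tree V T"
    and "r \<in> V"
    and "N = 2 * (n - 1)"
    and "dfs_tour T r N v"
    and "\<forall>t\<in>{1..N}. simple_graph V (G t) \<and> card (T - G t) \<le> k"
    and "valid_elimination N v G A"
  shows "card (A (N div (2 * k))) \<le> 6 * k"
proof -
  define t0 where "t0 = N div (2 * k)"
  have N2: "N \<ge> 2" using assms by simp
  have Nlt: "N < 2 * k * (t0 + 1)"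
  proof -
    have "N = 2 * k * t0 + N mod (2 * k)" unfolding t0_def by simp
    moreover have "N mod (2 * k) < 2 * k" using assms(4) by simp
    ultimately show ?thesis by (simp add: algebra_simps)
  qed
  have t0N: "t0 < N"
  proof -
    have "t0 \<le> N div 2" unfolding t0_def using assms(4) div_le_mono2[of 2 "2 * k" N] by simp
    then show ?thesis using N2 by simp
  qed
  show ?thesis
  proof (cases "t0 = 0")
    case True
    then have "A t0 = {1..N}" using assms(10) by (simp add: valid_elimination_def)
    then show ?thesis using True Nlt t0_def by simp
  next
    case False
    define S where "S = A t0"
    define mc where "mc i = mcnt N v G i t0" for i
    have t0r: "t0 \<in> {1..N}" using False t0N by simp
    have SN: "S \<subseteq> {1..N}" unfolding S_def using A_sub[OF assms(10)] t0N by simp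
    have finS: "finite S" using SN finite_subset by blast
    have N0: "0 < N" using N2 by simp
    have mcN: "mc i < N" for i using mcnt_le[of N v G i t0] t0N unfolding mc_def by simp
    have Darc: "agent_D N v G i t0 = arc N i (mc i)" if "i \<in> S" for i
    proof -
      have "1 \<le> i" "i \<le> N" using that SN by auto
      then show ?thesis unfolding agent_D_def mc_def
        using pos_eq[OF N0, of i v G t0] cint_char[OF N0 _ _ mcN[of i, unfolded mc_def]] by simp
    qed
    have noelim0: "\<nexists>S'. (S, S') \<in> elim_step N v G t0"
      using assms(10) t0r unfolding valid_elimination_def S_def by blast
    have noelim: "\<not> arc N i (mc i) \<subseteq> (\<Union>j\<in>S - {i}. arc N j (mc j))" if "i \<in> S" for i
    proof
      assume h: "arc N i (mc i) \<subseteq> (\<Union>j\<in>S - {i}. arc N j (mc j))"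
      have "agent_D N v G i t0 \<subseteq> (\<Union>j\<in>S - {i}. agent_D N v G j t0)"
        using h Darc that by auto
      then have "(S, S - {i}) \<in> elim_step N v G t0" using that unfolding elim_step_def by blast
      then show False using noelim0 by blast
    qed
    have cover2: "card {i\<in>S. x \<in> arc N i (mc i)} \<le> 2" for x
    proof (rule ccontr)
      assume "\<not> ?thesis"
      then have "3 \<le> card {i\<in>S. x \<in> arc N i (mc i)}" by simp
      then obtain a b c where abc: "a \<in> {i\<in>S. x \<in> arc N i (mc i)}" "b \<in> {i\<in>S. x \<in> arc N i (mc i)}"
        "c \<in> {i\<in>S. x \<in> arc N i (mc i)}" "a \<noteq> b" "b \<noteq> c" "a \<noteq> c"
        using three_elems[of "{i\<in>S. x \<in> arc N i (mc i)}"] finS by auto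
      then obtain i j l where ijl: "i \<in> {a,b,c}" "j \<in> {a,b,c}" "l \<in> {a,b,c}" "j \<noteq> i" "l \<noteq> i"
         "arc N i (mc i) \<subseteq> arc N j (mc j) \<union> arc N l (mc l)"
        using three[of x N a mc b c] by auto
      have "i \<in> S" "j \<in> S - {i}" "l \<in> S - {i}" using ijl abc by auto
      then have "arc N i (mc i) \<subseteq> (\<Union>j\<in>S - {i}. arc N j (mc j))" using ijl(6) by blast
      then show False using noelim \<open>i \<in> S\<close> by blast
    qed
    have sum1: "(\<Sum>i\<in>S. mc i + 1) \<le> 2 * N"
    proof -
      have "(\<Sum>i\<in>S. mc i + 1) \<le> (\<Sum>i\<in>S. card (arc N i (mc i)))"
        using SN by (intro sum_mono arc_card[OF N0 _ mcN]) auto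
      also have "\<dots> = (\<Sum>i\<in>S. \<Sum>x\<in>{1..N}. if x \<in> arc N i (mc i) then 1 else 0)"
      proof (rule sum.cong[OF refl])
        fix i
        have "arc N i (mc i) = {x\<in>{1..N}. x \<in> arc N i (mc i)}" unfolding arc_def by auto
        then have "card (arc N i (mc i)) = (\<Sum>x\<in>{x\<in>{1..N}. x \<in> arc N i (mc i)}. 1)" by simp
        also have "\<dots> = (\<Sum>x\<in>{1..N}. if x \<in> arc N i (mc i) then 1 else 0)"
          by (rule sum.inter_filter) simp
        finally show "card (arc N i (mc i)) = (\<Sum>x\<in>{1..N}. if x \<in> arc N i (mc i) then 1 else 0)" .
      qed
      also have "\<dots> = (\<Sum>x\<in>{1..N}. \<Sum>i\<in>S. if x \<in> arc N i (mc i) then 1 else 0)"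
        by (rule sum.swap)
      also have "\<dots> = (\<Sum>x\<in>{1..N}. card {i\<in>S. x \<in> arc N i (mc i)})"
        using finS by (simp add: sum.inter_filter[symmetric])
      also have "\<dots> \<le> (\<Sum>x\<in>{1..N}. 2)" by (intro sum_mono cover2)
      finally show ?thesis by simp
    qed
    have inj_pos: "i = j" if "i \<in> S" "j \<in> S" "agent_pos N v G i \<tau> = agent_pos N v G j \<tau>" "\<tau> \<le> t0" for i j \<tau>
    proof (rule ccontr)
      assume ne: "i \<noteq> j"
      have i1: "1 \<le> i" "i \<le> N" "1 \<le> j" "j \<le> N" using that SN by auto
      have "agent_pos N v G i t0 = agent_pos N v G j t0" using pos_same that by blast
      then have "wrapF N (i + mc i) = wrapF N (j + mc j)"
        using pos_eq[OF N0 i1(1,2)] pos_eq[OF N0 i1(3,4)] unfolding mc_def by metis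
      then have cg: "[i + mc i = j + mc j] (mod N)" using wrapF_eq_cong[OF N0] i1 by simp
      show False
      proof (cases "mc i \<le> mc j")
        case True
        have "arc N i (mc i) \<subseteq> arc N j (mc j) \<union> arc N j (mc j)"
          using sub2[of i "mc i" "j + mc j" N j "mc j" j "mc j" "mc i" "mc j" "mc j"] cg True by simp
        then have "arc N i (mc i) \<subseteq> (\<Union>j\<in>S - {i}. arc N j (mc j))" using that ne by blast
        then show False using noelim that by blast
      next
        case False
        have "arc N j (mc j) \<subseteq> arc N i (mc i) \<union> arc N i (mc i)"
          using sub2[of j "mc j" "i + mc i" N i "mc i" i "mc i" "mc j" "mc i" "mc i"] cong_sym[OF cg] False by simp
        then have "arc N j (mc j) \<subseteq> (\<Union>i\<in>S - {j}. arc N i (mc i))" using that ne by blast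
        then show False using noelim that by blast
      qed
    qed
    have finT: "finite T"
    proof -
      have "T \<subseteq> Pow V" using assms(5) unfolding is_tree_def simple_graph_def by auto
      then show ?thesis using assms(1) finite_subset by blast
    qed
    have tourT: "\<forall>i\<in>{1..N}. {v i, v (Suc i)} \<in> T"
      and tour2: "\<forall>e\<in>T. card {i\<in>{1..N}. {v i, v (Suc i)} = e} = 2"
      using assms(8) unfolding dfs_tour_def by auto
    have blk: "card {i\<in>S. \<not> moved N v G i \<sigma>} \<le> 2 * k" if "\<sigma> \<in> {1..t0}" for \<sigma>
    proof -
      define Q where "Q = {q\<in>{1..N}. {v q, v (Suc q)} \<notin> G \<sigma>}"
      have "card {i\<in>S. \<not> moved N v G i \<sigma>} \<le> card Q"
      proof (rule card_inj_on_le[of "\<lambda>i. agent_pos N v G i (\<sigma> - 1)"])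
        show "inj_on (\<lambda>i. agent_pos N v G i (\<sigma> - 1)) {i \<in> S. \<not> moved N v G i \<sigma>}"
          using inj_pos that by (intro inj_onI) auto
        show "(\<lambda>i. agent_pos N v G i (\<sigma> - 1)) ` {i \<in> S. \<not> moved N v G i \<sigma>} \<subseteq> Q"
        proof
          fix q assume "q \<in> (\<lambda>i. agent_pos N v G i (\<sigma> - 1)) ` {i \<in> S. \<not> moved N v G i \<sigma>}"
          then obtain i where i: "i \<in> S" "\<not> moved N v G i \<sigma>" "q = agent_pos N v G i (\<sigma> - 1)" by auto
          have "1 \<le> i" "i \<le> N" using i SN by auto
          then have "q \<in> {1..N}" using i pos_eq[OF N0] wrapF_range[OF N0] by metis
          then show "q \<in> Q" using i unfolding Q_def moved_def by auto
        qed
        show "finite Q" unfolding Q_def by simp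
      qed
      also have "card Q \<le> card (\<Union>e\<in>T - G \<sigma>. {q\<in>{1..N}. {v q, v (Suc q)} = e})"
        using tourT finT by (intro card_mono) (auto simp: Q_def)
      also have "\<dots> \<le> (\<Sum>e\<in>T - G \<sigma>. card {q\<in>{1..N}. {v q, v (Suc q)} = e})"
        using finT by (intro card_UN_le) simp
      also have "\<dots> = (\<Sum>e\<in>T - G \<sigma>. 2)" using tour2 by simp
      also have "\<dots> = 2 * card (T - G \<sigma>)" by simp
      also have "\<dots> \<le> 2 * k" using assms(9) that t0N by auto
      finally show ?thesis .
    qed
    have sum2: "(\<Sum>i\<in>S. t0 - mc i) \<le> 2 * k * t0"
    proof -
      have "(\<Sum>i\<in>S. t0 - mc i) = (\<Sum>i\<in>S. \<Sum>\<sigma>\<in>{1..t0}. if \<not> moved N v G i \<sigma> then 1 else 0)"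
      proof (rule sum.cong[OF refl])
        fix i
        have "t0 - mc i = card {\<sigma>\<in>{1..t0}. \<not> moved N v G i \<sigma>}" using blocked_card unfolding mc_def by metis
        also have "\<dots> = (\<Sum>\<sigma>\<in>{\<sigma>\<in>{1..t0}. \<not> moved N v G i \<sigma>}. 1)" by simp
        also have "\<dots> = (\<Sum>\<sigma>\<in>{1..t0}. if \<not> moved N v G i \<sigma> then 1 else 0)"
          by (rule sum.inter_filter) simp
        finally show "t0 - mc i = (\<Sum>\<sigma>\<in>{1..t0}. if \<not> moved N v G i \<sigma> then 1 else 0)" .
      qed
      also have "\<dots> = (\<Sum>\<sigma>\<in>{1..t0}. \<Sum>i\<in>S. if \<not> moved N v G i \<sigma> then 1 else 0)"
        by (rule sum.swap)
      also have "\<dots> = (\<Sum>\<sigma>\<in>{1..t0}. card {i\<in>S. \<not> moved N v G i \<sigma>})"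
        using finS by (simp add: sum.inter_filter[symmetric])
      also have "\<dots> \<le> (\<Sum>\<sigma>\<in>{1..t0}. 2 * k)" by (intro sum_mono blk)
      finally show ?thesis by (simp add: mult.commute)
    qed
    have "(\<Sum>i\<in>S. mc i + 1) + (\<Sum>i\<in>S. t0 - mc i) = (\<Sum>i\<in>S. t0 + 1)"
      unfolding sum.distrib[symmetric]
    proof (rule sum.cong[OF refl])
      fix i
      have "mc i \<le> t0" unfolding mc_def by (rule mcnt_le)
      then show "mc i + 1 + (t0 - mc i) = t0 + 1" by simp
    qed
    then have "card S * (t0 + 1) \<le> 2 * N + 2 * k * t0" using sum1 sum2 by simp
    also have "\<dots> < 6 * k * (t0 + 1)" using Nlt by (simp add: algebra_simps)
    finally have "card S * (t0 + 1) < 6 * k * (t0 + 1)" .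
    then have "card S < 6 * k" by (metis mult_less_cancel2)
    then show ?thesis unfolding S_def t0_def by simp
  qed
qed

end
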